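(* Let $F$ be a field of characteristic $2$, let $\mathfrak b$ be an anisotropic symmetric bilinear form over $F$, and let $\phi$ be a subform of the quasilinear quadratic form $\phi_{\mathfrak b}$. Then there exists a subform $\mathfrak c$ of $\mathfrak b$ with $\phi_{\mathfrak c}\simeq\phi$, and such a $\mathfrak c$ is unique up to isometry.
   Context: Symmetric bilinear forms are non-degenerate and finite-dimensional; $\phi_{\mathfrak b}(v)=\mathfrak b(v,v)$ is the quadratic form associated to $\mathfrak b$, which is quasilinear ($\phi(v+w)=\phi(v)+\phi(w)$). A subform of a symmetric bilinear form $\mathfrak b$ is a form isometric to an orthogonal summand of $\mathfrak b$. A subform of a quasilinear quadratic form $\phi$ is a quasilinear form $\psi$ with $\phi\simeq\psi\perp\sigma$ for some quasilinear quadratic form $\sigma$. *)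

theory Defs
  imports "Jordan_Normal_Form.Matrix" "Jordan_Normal_Form.Determinant"
begin

(* Symmetric bilinear forms on F^n, represented by their Gram matrices.
   By the paper's convention they are non-degenerate. *)
definition sym_bil_form :: "'a::field mat \<Rightarrow> bool" where
  "sym_bil_form B \<longleftrightarrow> B \<in> carrier_mat (dim_row B) (dim_row B) \<and> transpose_mat B = B \<and> det B \<noteq> 0"

definition bil_eval :: "'a::field mat \<Rightarrow> 'a vec \<Rightarrow> 'a vec \<Rightarrow> 'a" where
  "bil_eval B v w = v \<bullet> (B *\<^sub>v w)"

definition bil_anisotropic :: "'a::field mat \<Rightarrow> bool" where
  "bil_anisotropic B \<longleftrightarrow> (\<forall>v \<in> carrier_vec (dim_row B). v \<noteq> 0\<^sub>v (dim_row B) \<longrightarrow> bil_eval B v v \<noteq> 0)"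

definition bil_iso :: "'a::field mat \<Rightarrow> 'a mat \<Rightarrow> bool" where
  "bil_iso B C \<longleftrightarrow> dim_row B = dim_row C \<and>
     (\<exists>P \<in> carrier_mat (dim_row B) (dim_row B). invertible_mat P \<and> C = transpose_mat P * B * P)"

definition bil_osum :: "'a::field mat \<Rightarrow> 'a mat \<Rightarrow> 'a mat" where
  "bil_osum C D = four_block_mat C (0\<^sub>m (dim_row C) (dim_row D)) (0\<^sub>m (dim_row D) (dim_row C)) D"

definition bil_subform :: "'a::field mat \<Rightarrow> 'a mat \<Rightarrow> bool" where
  "bil_subform C B \<longleftrightarrow> sym_bil_form C \<and> (\<exists>D. sym_bil_form D \<and> bil_iso B (bil_osum C D))"

(* Quadratic forms on F^n: a pair (n, q) with q : F^n -> F (values outside carrier_vec n irrelevant) *)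
type_synonym 'a qform = "nat \<times> ('a vec \<Rightarrow> 'a)"

definition quad_form :: "'a::field qform \<Rightarrow> bool" where
  "quad_form Q \<longleftrightarrow> (case Q of (n, q) \<Rightarrow>
     (\<forall>a. \<forall>v \<in> carrier_vec n. q (a \<cdot>\<^sub>v v) = a^2 * q v) \<and>
     (\<forall>u \<in> carrier_vec n. \<forall>v \<in> carrier_vec n. \<forall>w \<in> carrier_vec n. \<forall>a b.
        q (a \<cdot>\<^sub>v u + b \<cdot>\<^sub>v v + w) - q (a \<cdot>\<^sub>v u + b \<cdot>\<^sub>v v) - q w
          = a * (q (u + w) - q u - q w) + b * (q (v + w) - q v - q w)))"

definition quasilinear :: "'a::field qform \<Rightarrow> bool" where
  "quasilinear Q \<longleftrightarrow> quad_form Q \<and> (case Q of (n, q) \<Rightarrow>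
     (\<forall>v \<in> carrier_vec n. \<forall>w \<in> carrier_vec n. q (v + w) = q v + q w))"

definition qf_iso :: "'a::field qform \<Rightarrow> 'a qform \<Rightarrow> bool" where
  "qf_iso Q S \<longleftrightarrow> fst Q = fst S \<and>
     (\<exists>P \<in> carrier_mat (fst Q) (fst Q). invertible_mat P \<and>
        (\<forall>v \<in> carrier_vec (fst Q). snd S v = snd Q (P *\<^sub>v v)))"

definition qf_osum :: "'a::field qform \<Rightarrow> 'a qform \<Rightarrow> 'a qform" where
  "qf_osum Q S = (fst Q + fst S,
     \<lambda>v. snd Q (vec (fst Q) (\<lambda>i. v $ i)) + snd S (vec (fst S) (\<lambda>i. v $ (fst Q + i))))"

definition ql_subform :: "'a::field qform \<Rightarrow> 'a qform \<Rightarrow> bool" where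
  "ql_subform Psi Phi \<longleftrightarrow> quasilinear Psi \<and> (\<exists>Sigma. quasilinear Sigma \<and> qf_iso Phi (qf_osum Psi Sigma))"

definition qf_of :: "'a::field mat \<Rightarrow> 'a qform" where
  "qf_of B = (dim_row B, \<lambda>v. bil_eval B v v)"

end

theory Submission
  imports Defs
begin

lemma two_zero: assumes "CHAR('a::field) = 2" shows "(2::'a) = 0"
  using of_nat_CHAR[where 'a='a] assms by simp

lemma sym_swap:
  fixes B :: "'a::field mat"
  assumes B: "B \<in> carrier_mat n n" and s: "transpose_mat B = B"
    and x: "x \<in> carrier_vec n" and y: "y \<in> carrier_vec n"
  shows "y \<bullet> (B *\<^sub>v x) = x \<bullet> (B *\<^sub>v y)"
proof -
  have "y \<bullet> (B *\<^sub>v x) = (transpose_mat B *\<^sub>v y) \<bullet> x"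
    using transpose_vec_mult_scalar[OF B x y] by simp
  also have "\<dots> = x \<bullet> (B *\<^sub>v y)" using s comm_scalar_prod[of x n "B *\<^sub>v y"] B x y by simp
  finally show ?thesis .
qed

lemma q_add:
  fixes B :: "'a::field mat"
  assumes c: "CHAR('a) = 2" and B: "B \<in> carrier_mat n n" and s: "transpose_mat B = B"
    and x: "x \<in> carrier_vec n" and y: "y \<in> carrier_vec n"
  shows "bil_eval B (x + y) (x + y) = bil_eval B x x + bil_eval B y y"
proof -
  have "bil_eval B (x + y) (x + y) = x \<bullet> (B *\<^sub>v x) + x \<bullet> (B *\<^sub>v y) + (y \<bullet> (B *\<^sub>v x) + y \<bullet> (B *\<^sub>v y))"
    unfolding bil_eval_def using B x y
    by (simp add: mult_add_distrib_mat_vec add_scalar_prod_distrib[of _ n] scalar_prod_add_distrib[of _ n])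
  also have "\<dots> = x \<bullet> (B *\<^sub>v x) + y \<bullet> (B *\<^sub>v y) + 2 * (x \<bullet> (B *\<^sub>v y))"
    using sym_swap[OF B s x y] by (simp add: algebra_simps)
  finally show ?thesis using two_zero[OF c] by (simp add: bil_eval_def)
qed

lemma mat_vec_uminus:
  fixes B :: "'a::field mat"
  assumes B: "B \<in> carrier_mat n n" and y: "y \<in> carrier_vec n"
  shows "B *\<^sub>v (- y) = - (B *\<^sub>v y)"
  by (rule eq_vecI, insert B y, auto)

lemma q_uminus:
  fixes B :: "'a::field mat"
  assumes B: "B \<in> carrier_mat n n" and y: "y \<in> carrier_vec n"
  shows "bil_eval B (- y) (- y) = bil_eval B y y"
  unfolding bil_eval_def mat_vec_uminus[OF B y] using B y by simp

lemma q_inj: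
  fixes B :: "'a::field mat"
  assumes c: "CHAR('a) = 2" and B: "B \<in> carrier_mat n n" and s: "transpose_mat B = B"
    and an: "\<forall>v \<in> carrier_vec n. v \<noteq> 0\<^sub>v n \<longrightarrow> bil_eval B v v \<noteq> 0"
    and x: "x \<in> carrier_vec n" and y: "y \<in> carrier_vec n"
    and e: "bil_eval B x x = bil_eval B y y"
  shows "x = y"
proof -
  have "bil_eval B (x + - y) (x + - y) = bil_eval B x x + bil_eval B y y"
    using q_add[OF c B s x, of "- y"] q_uminus[OF B y] y by simp
  also have "\<dots> = 2 * bil_eval B x x" using e by simp
  also have "\<dots> = 0" using two_zero[OF c] by simp
  finally have "x + - y = 0\<^sub>v n" using an x y by (meson add_carrier_vec uminus_carrier_vec)
  note z = this
  show ?thesis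
  proof (rule eq_vecI)
    fix i assume "i < dim_vec y"
    then have i: "i < n" using y by simp
    from arg_cong[OF z, of "\<lambda>v. v $ i"] have "x $ i + - (y $ i) = 0" using x y i by simp
    then show "x $ i = y $ i" by simp
  qed (use x y in simp)
qed

lemma mat_vec_zero:
  fixes A :: "'a::field mat"
  assumes A: "A \<in> carrier_mat r c" shows "A *\<^sub>v 0\<^sub>v c = 0\<^sub>v r"
  by (rule eq_vecI, insert A, auto)

lemma block_bil:
  fixes A1 :: "'a::field mat"
  assumes A: "A1 \<in> carrier_mat k k" "A2 \<in> carrier_mat k m" "A3 \<in> carrier_mat m k" "A4 \<in> carrier_mat m m"
    and x: "x \<in> carrier_vec k" and y: "y \<in> carrier_vec k"
  shows "(x @\<^sub>v 0\<^sub>v m) \<bullet> (four_block_mat A1 A2 A3 A4 *\<^sub>v (y @\<^sub>v 0\<^sub>v m)) = x \<bullet> (A1 *\<^sub>v y)"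
proof -
  have "four_block_mat A1 A2 A3 A4 *\<^sub>v (y @\<^sub>v 0\<^sub>v m) = (A1 *\<^sub>v y + A2 *\<^sub>v 0\<^sub>v m) @\<^sub>v (A3 *\<^sub>v y + A4 *\<^sub>v 0\<^sub>v m)"
    by (rule four_block_mat_mult_vec[OF A y], simp)
  also have "\<dots> = (A1 *\<^sub>v y) @\<^sub>v (A3 *\<^sub>v y)" using A y by (simp add: mat_vec_zero)
  finally show ?thesis using A x y
    by (simp add: scalar_prod_append[of x k "0\<^sub>v m" m])
qed

lemma ptbp:
  fixes B :: "'a::field mat"
  assumes B: "B \<in> carrier_mat n n" and P: "P \<in> carrier_mat n k"
    and x: "x \<in> carrier_vec k" and y: "y \<in> carrier_vec k"
  shows "x \<bullet> ((transpose_mat P * B * P) *\<^sub>v y) = (P *\<^sub>v x) \<bullet> (B *\<^sub>v (P *\<^sub>v y))"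
proof -
  have "(transpose_mat P * B * P) *\<^sub>v y = (transpose_mat P * B) *\<^sub>v (P *\<^sub>v y)"
    using B P y by (intro assoc_mult_mat_vec[of _ k n]) auto
  also have "\<dots> = transpose_mat P *\<^sub>v (B *\<^sub>v (P *\<^sub>v y))"
    using B P y by (intro assoc_mult_mat_vec[of _ k n]) auto
  finally have "(transpose_mat P * B * P) *\<^sub>v y = transpose_mat P *\<^sub>v (B *\<^sub>v (P *\<^sub>v y))" .
  moreover have "x \<bullet> (transpose_mat P *\<^sub>v (B *\<^sub>v (P *\<^sub>v y))) = (P *\<^sub>v x) \<bullet> (B *\<^sub>v (P *\<^sub>v y))"
    using transpose_vec_mult_scalar[of "transpose_mat P" k n "B *\<^sub>v (P *\<^sub>v y)" x] B P x y by simp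
  ultimately show ?thesis by simp
qed

lemma entry_unit:
  fixes A :: "'a::field mat"
  assumes A: "A \<in> carrier_mat r c" and i: "i < r" and j: "j < c"
  shows "A $$ (i,j) = unit_vec r i \<bullet> (A *\<^sub>v unit_vec c j)"
  using A i j by simp

lemma inv_ex:
  fixes A :: "'a::field mat"
  assumes A: "A \<in> carrier_mat n n" and i: "invertible_mat A"
  shows "\<exists>Ai \<in> carrier_mat n n. A * Ai = 1\<^sub>m n \<and> Ai * A = 1\<^sub>m n"
proof -
  from i obtain Bi where "inverts_mat A Bi" "inverts_mat Bi A" unfolding invertible_mat_def by auto
  then have 1: "A * Bi = 1\<^sub>m n" and 2: "Bi * A = 1\<^sub>m (dim_row Bi)" using A unfolding inverts_mat_def by auto
  have "dim_col Bi = n" using arg_cong[OF 1, of dim_col] by simp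
  moreover have "dim_row Bi = n" using arg_cong[OF 2, of dim_col] A by simp
  ultimately show ?thesis using 1 2 by auto
qed

lemma inv_intro:
  fixes A :: "'a::field mat"
  assumes A: "A \<in> carrier_mat n n" and Ai: "Ai \<in> carrier_mat n n"
    and "A * Ai = 1\<^sub>m n" "Ai * A = 1\<^sub>m n"
  shows "invertible_mat A"
  using assms unfolding invertible_mat_def inverts_mat_def square_mat.simps by auto

lemma inv_det:
  fixes A :: "'a::field mat"
  assumes A: "A \<in> carrier_mat n n" and d: "det A \<noteq> 0"
  shows "\<exists>Ai \<in> carrier_mat n n. A * Ai = 1\<^sub>m n \<and> Ai * A = 1\<^sub>m n"
  using det_non_zero_imp_unit[OF A d, of "()"] unfolding Units_def ring_mat_def by auto

lemma det_inv:
  fixes A :: "'a::field mat"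
  assumes A: "A \<in> carrier_mat n n" and i: "invertible_mat A"
  shows "det A \<noteq> 0"
proof -
  obtain Ai where Ai: "Ai \<in> carrier_mat n n" "A * Ai = 1\<^sub>m n" using inv_ex[OF A i] by auto
  show ?thesis using arg_cong[OF Ai(2), of det] det_mult[OF A Ai(1)] by auto
qed

lemma four_block_eq:
  assumes c: "A1 \<in> carrier_mat k k" "A2 \<in> carrier_mat k m" "A3 \<in> carrier_mat m k" "A4 \<in> carrier_mat m m"
    "B1 \<in> carrier_mat k k" "B2 \<in> carrier_mat k m" "B3 \<in> carrier_mat m k" "B4 \<in> carrier_mat m m"
    and e: "four_block_mat A1 A2 A3 A4 = four_block_mat B1 B2 B3 B4"
  shows "A1 = B1 \<and> A2 = B2 \<and> A3 = B3 \<and> A4 = B4"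
proof -
  have ix: "\<And>i j. i < k + m \<Longrightarrow> j < k + m \<Longrightarrow> four_block_mat A1 A2 A3 A4 $$ (i,j) = four_block_mat B1 B2 B3 B4 $$ (i,j)"
    using e by simp
  have "A1 = B1"
  proof (rule eq_matI)
    fix i j assume "i < dim_row B1" "j < dim_col B1"
    then show "A1 $$ (i,j) = B1 $$ (i,j)" using ix[of i j] c by auto
  qed (use c in auto)
  moreover have "A2 = B2"
  proof (rule eq_matI)
    fix i j assume "i < dim_row B2" "j < dim_col B2"
    then show "A2 $$ (i,j) = B2 $$ (i,j)" using ix[of i "j + k"] c by auto
  qed (use c in auto)
  moreover have "A3 = B3"
  proof (rule eq_matI)
    fix i j assume "i < dim_row B3" "j < dim_col B3"
    then show "A3 $$ (i,j) = B3 $$ (i,j)" using ix[of "i + k" j] c by auto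
  qed (use c in auto)
  moreover have "A4 = B4"
  proof (rule eq_matI)
    fix i j assume "i < dim_row B4" "j < dim_col B4"
    then show "A4 $$ (i,j) = B4 $$ (i,j)" using ix[of "i + k" "j + k"] c by auto
  qed (use c in auto)
  ultimately show ?thesis by simp
qed


lemma sub_embed:
  fixes B :: "'a::field mat"
  assumes sb: "bil_subform C B" and B: "B \<in> carrier_mat n n"
  shows "\<exists>g. (\<forall>x\<in>carrier_vec (dim_row C). g x \<in> carrier_vec n) \<and>
     (\<forall>x\<in>carrier_vec (dim_row C). \<forall>y\<in>carrier_vec (dim_row C). x \<bullet> (C *\<^sub>v y) = g x \<bullet> (B *\<^sub>v g y))"
proof -
  obtain D P where C: "C \<in> carrier_mat (dim_row C) (dim_row C)" and D: "D \<in> carrier_mat (dim_row D) (dim_row D)"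
    and dims: "dim_row B = dim_row (bil_osum C D)" and P: "P \<in> carrier_mat (dim_row B) (dim_row B)"
    and e: "bil_osum C D = transpose_mat P * B * P"
    using sb unfolding bil_subform_def sym_bil_form_def bil_iso_def by blast
  define k where "k = dim_row C"
  define m where "m = dim_row D"
  have n: "n = k + m" using dims B by (simp add: bil_osum_def k_def m_def)
  have Ck: "C \<in> carrier_mat k k" unfolding k_def by (rule C)
  have Dm: "D \<in> carrier_mat m m" unfolding m_def by (rule D)
  have Pn: "P \<in> carrier_mat n n" using P B by auto
  show ?thesis
  proof (intro exI[of _ "\<lambda>x. P *\<^sub>v (x @\<^sub>v 0\<^sub>v m)"] conjI ballI)
    fix x :: "'a vec" assume "x \<in> carrier_vec (dim_row C)"
    then have "x @\<^sub>v 0\<^sub>v m \<in> carrier_vec n" using n by (auto simp: k_def[symmetric])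
    then show "P *\<^sub>v (x @\<^sub>v 0\<^sub>v m) \<in> carrier_vec n" using Pn by simp
  next
    fix x y :: "'a vec" assume x: "x \<in> carrier_vec (dim_row C)" and y: "y \<in> carrier_vec (dim_row C)"
    then have x: "x \<in> carrier_vec k" and y: "y \<in> carrier_vec k" by (auto simp: k_def)
    have xy: "x @\<^sub>v 0\<^sub>v m \<in> carrier_vec n" "y @\<^sub>v 0\<^sub>v m \<in> carrier_vec n" using x y n by auto
    have "x \<bullet> (C *\<^sub>v y) = (x @\<^sub>v 0\<^sub>v m) \<bullet> (bil_osum C D *\<^sub>v (y @\<^sub>v 0\<^sub>v m))"
      unfolding bil_osum_def k_def[symmetric] m_def[symmetric]
      by (rule block_bil[symmetric, OF Ck _ _ Dm x y], auto)
    also have "\<dots> = (P *\<^sub>v (x @\<^sub>v 0\<^sub>v m)) \<bullet> (B *\<^sub>v (P *\<^sub>v (y @\<^sub>v 0\<^sub>v m)))"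
      unfolding e by (rule ptbp[OF B Pn xy])
    finally show "x \<bullet> (C *\<^sub>v y) = (P *\<^sub>v (x @\<^sub>v 0\<^sub>v m)) \<bullet> (B *\<^sub>v (P *\<^sub>v (y @\<^sub>v 0\<^sub>v m)))" .
  qed
qed

lemma uniq:
  fixes B :: "'a::field mat"
  assumes c: "CHAR('a) = 2" and sB: "sym_bil_form B" and an: "bil_anisotropic B"
    and sC: "bil_subform C B" and iC: "qf_iso (qf_of C) phi"
    and sD: "bil_subform D B" and iD: "qf_iso (qf_of D) phi"
  shows "bil_iso C D"
proof -
  define n where "n = dim_row B"
  have B: "B \<in> carrier_mat n n" and Bs: "transpose_mat B = B" using sB unfolding sym_bil_form_def n_def by auto
  have anB: "\<forall>v \<in> carrier_vec n. v \<noteq> 0\<^sub>v n \<longrightarrow> bil_eval B v v \<noteq> 0" using an unfolding bil_anisotropic_def n_def by auto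
  define k where "k = dim_row C"
  have kD: "dim_row D = k" using iC iD unfolding qf_iso_def qf_of_def k_def by auto
  have C: "C \<in> carrier_mat k k" using sC unfolding bil_subform_def sym_bil_form_def k_def by auto
  have D: "D \<in> carrier_mat k k" using sD kD unfolding bil_subform_def sym_bil_form_def by auto
  obtain U where U: "U \<in> carrier_mat k k" "invertible_mat U" and hU: "\<forall>v\<in>carrier_vec k. snd phi v = bil_eval C (U *\<^sub>v v) (U *\<^sub>v v)"
    using iC unfolding qf_iso_def qf_of_def k_def by auto
  obtain V where V: "V \<in> carrier_mat k k" "invertible_mat V" and hV: "\<forall>v\<in>carrier_vec k. snd phi v = bil_eval D (V *\<^sub>v v) (V *\<^sub>v v)"
    using iD kD unfolding qf_iso_def qf_of_def by auto
  obtain g where g1: "\<forall>x\<in>carrier_vec k. g x \<in> carrier_vec n"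
    and g2: "\<forall>x\<in>carrier_vec k. \<forall>y\<in>carrier_vec k. x \<bullet> (C *\<^sub>v y) = g x \<bullet> (B *\<^sub>v g y)"
    using sub_embed[OF sC B] unfolding k_def by blast
  obtain h where h1: "\<forall>x\<in>carrier_vec k. h x \<in> carrier_vec n"
    and h2: "\<forall>x\<in>carrier_vec k. \<forall>y\<in>carrier_vec k. x \<bullet> (D *\<^sub>v y) = h x \<bullet> (B *\<^sub>v h y)"
    using sub_embed[OF sD B] unfolding kD by blast
  have gh: "g (U *\<^sub>v v) = h (V *\<^sub>v v)" if v: "v \<in> carrier_vec k" for v
  proof -
    have Uv: "U *\<^sub>v v \<in> carrier_vec k" and Vv: "V *\<^sub>v v \<in> carrier_vec k" using U V v by auto
    have "bil_eval B (g (U *\<^sub>v v)) (g (U *\<^sub>v v)) = bil_eval C (U *\<^sub>v v) (U *\<^sub>v v)"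
      using g2 Uv unfolding bil_eval_def by simp
    also have "\<dots> = bil_eval D (V *\<^sub>v v) (V *\<^sub>v v)" using hU hV v by simp
    also have "\<dots> = bil_eval B (h (V *\<^sub>v v)) (h (V *\<^sub>v v))"
      using h2 Vv unfolding bil_eval_def by simp
    finally show ?thesis using q_inj[OF c B Bs anB] g1 h1 Uv Vv by blast
  qed
  have eqUV: "transpose_mat U * C * U = transpose_mat V * D * V"
  proof (rule eq_matI)
    fix i j assume ij: "i < dim_row (transpose_mat V * D * V)" "j < dim_col (transpose_mat V * D * V)"
    then have i: "i < k" and j: "j < k" using V by auto
    have ei: "unit_vec k i \<in> carrier_vec k" and ej: "unit_vec k j \<in> carrier_vec k" by auto
    have "(transpose_mat U * C * U) $$ (i,j) = unit_vec k i \<bullet> ((transpose_mat U * C * U) *\<^sub>v unit_vec k j)"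
      by (rule entry_unit, insert U C i j, auto)
    also have "\<dots> = (U *\<^sub>v unit_vec k i) \<bullet> (C *\<^sub>v (U *\<^sub>v unit_vec k j))"
      by (rule ptbp[OF C U(1) ei ej])
    also have "\<dots> = g (U *\<^sub>v unit_vec k i) \<bullet> (B *\<^sub>v g (U *\<^sub>v unit_vec k j))"
      using g2 U by auto
    also have "\<dots> = h (V *\<^sub>v unit_vec k i) \<bullet> (B *\<^sub>v h (V *\<^sub>v unit_vec k j))"
      using gh[OF ei] gh[OF ej] by simp
    also have "\<dots> = (V *\<^sub>v unit_vec k i) \<bullet> (D *\<^sub>v (V *\<^sub>v unit_vec k j))"
      using h2 V by auto
    also have "\<dots> = unit_vec k i \<bullet> ((transpose_mat V * D * V) *\<^sub>v unit_vec k j)"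
      by (rule ptbp[symmetric, OF D V(1) ei ej])
    also have "\<dots> = (transpose_mat V * D * V) $$ (i,j)"
      by (rule entry_unit[symmetric], insert V D i j, auto)
    finally show "(transpose_mat U * C * U) $$ (i,j) = (transpose_mat V * D * V) $$ (i,j)" .
  qed (insert U V C D, auto)
  obtain Vi where Vi: "Vi \<in> carrier_mat k k" "V * Vi = 1\<^sub>m k" "Vi * V = 1\<^sub>m k" using inv_ex[OF V] by auto
  obtain Ui where Ui: "Ui \<in> carrier_mat k k" "U * Ui = 1\<^sub>m k" "Ui * U = 1\<^sub>m k" using inv_ex[OF U] by auto
  define W where "W = U * Vi"
  have W: "W \<in> carrier_mat k k" using U Vi W_def by auto
  have Wi: "invertible_mat W"
  proof (rule inv_intro[OF W, of "V * Ui"])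
    show "V * Ui \<in> carrier_mat k k" using V Ui by auto
    have "W * (V * Ui) = U * ((Vi * V) * Ui)" unfolding W_def using U(1) V(1) Vi(1) Ui(1) by (simp add: assoc_mult_mat[of _ k k _ k _ k])
    then show "W * (V * Ui) = 1\<^sub>m k" unfolding Vi(3) using Ui(1) U(1) Ui(2) by (simp add: assoc_mult_mat[of _ k k _ k _ k])
    have "V * Ui * W = V * ((Ui * U) * Vi)" unfolding W_def using U(1) V(1) Vi(1) Ui(1) by (simp add: assoc_mult_mat[of _ k k _ k _ k])
    then show "V * Ui * W = 1\<^sub>m k" unfolding Ui(3) using Vi(1) V(1) Vi(2) by (simp add: assoc_mult_mat[of _ k k _ k _ k])
  qed
  have tW: "transpose_mat W = transpose_mat Vi * transpose_mat U" unfolding W_def by (rule transpose_mult[OF U(1) Vi(1)])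
  have tV: "transpose_mat (V * Vi) = transpose_mat Vi * transpose_mat V" by (rule transpose_mult[OF V(1) Vi(1)])
  have "transpose_mat W * C * W = transpose_mat Vi * (transpose_mat U * C * U) * Vi"
    unfolding tW unfolding W_def using U(1) Vi(1) C by (simp add: assoc_mult_mat[of _ k k _ k _ k])
  also have "\<dots> = transpose_mat Vi * (transpose_mat V * D * V) * Vi" unfolding eqUV ..
  also have "\<dots> = transpose_mat (V * Vi) * D * (V * Vi)"
    unfolding tV using V(1) Vi(1) D by (simp add: assoc_mult_mat[of _ k k _ k _ k])
  also have "\<dots> = D" unfolding Vi(2) using D by (simp add: assoc_mult_mat[of _ k k _ k _ k])
  finally have eqW: "transpose_mat W * C * W = D" .
  have d: "dim_row C = dim_row D" using kD k_def by simp
  have W': "W \<in> carrier_mat (dim_row C) (dim_row C)" using W unfolding k_def .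
  show ?thesis unfolding bil_iso_def using d W' Wi eqW by metis
qed


lemma uminus_zero_mat'[simp]: "- (0\<^sub>m r c :: 'a::field mat) = 0\<^sub>m r c"
  by (rule eq_matI, auto)

lemma exist:
  fixes B :: "'a::field mat"
  assumes c: "CHAR('a) = 2" and sB: "sym_bil_form B" and an: "bil_anisotropic B"
    and sub: "ql_subform phi (qf_of B)"
  shows "\<exists>C. bil_subform C B \<and> qf_iso (qf_of C) phi"
proof -
  define n where "n = dim_row B"
  have B: "B \<in> carrier_mat n n" and Bs: "transpose_mat B = B" and dB: "det B \<noteq> 0"
    using sB unfolding sym_bil_form_def n_def by auto
  have anB: "\<forall>v \<in> carrier_vec n. v \<noteq> 0\<^sub>v n \<longrightarrow> bil_eval B v v \<noteq> 0" using an unfolding bil_anisotropic_def n_def by auto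
  obtain k p where phi: "phi = (k, p)" by (cases phi)
  obtain Sigma where qS: "quasilinear Sigma" and iso: "qf_iso (qf_of B) (qf_osum phi Sigma)"
    using sub unfolding ql_subform_def by auto
  obtain m s where Sig: "Sigma = (m, s)" by (cases Sigma)
  have n: "n = k + m" using iso unfolding qf_iso_def qf_of_def qf_osum_def phi Sig n_def by simp
  obtain P where P: "P \<in> carrier_mat n n" "invertible_mat P"
    and hP: "\<forall>v\<in>carrier_vec n. p (vec k (\<lambda>i. v $ i)) + s (vec m (\<lambda>i. v $ (k + i))) = bil_eval B (P *\<^sub>v v) (P *\<^sub>v v)"
    using iso unfolding qf_iso_def qf_of_def qf_osum_def phi Sig n_def by auto
  obtain Pi where Pi: "Pi \<in> carrier_mat n n" "Pi * P = 1\<^sub>m n" "P * Pi = 1\<^sub>m n" using inv_ex[OF P] by auto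
  have s0: "s (0\<^sub>v m) = 0"
  proof -
    have h: "\<forall>v\<in>carrier_vec m. \<forall>w\<in>carrier_vec m. s (v + w) = s v + s w"
      using qS unfolding quasilinear_def Sig by simp
    have z: "0\<^sub>v m \<in> carrier_vec m" by simp
    have "s (0\<^sub>v m + 0\<^sub>v m) = s (0\<^sub>v m) + s (0\<^sub>v m)" using h z by blast
    moreover have "0\<^sub>v m + 0\<^sub>v m = (0\<^sub>v m :: 'a vec)" by simp
    ultimately have "s (0\<^sub>v m) + s (0\<^sub>v m) = s (0\<^sub>v m)" by simp
    then show ?thesis by (metis add_cancel_left_right)
  qed
  have K: "p w = bil_eval B (P *\<^sub>v (w @\<^sub>v 0\<^sub>v m)) (P *\<^sub>v (w @\<^sub>v 0\<^sub>v m))" if w: "w \<in> carrier_vec k" for w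
  proof -
    have 1: "vec k (\<lambda>i. (w @\<^sub>v 0\<^sub>v m) $ i) = w" by (rule eq_vecI, insert w, auto)
    have 2: "vec m (\<lambda>i. (w @\<^sub>v 0\<^sub>v m) $ (k + i)) = 0\<^sub>v m" by (rule eq_vecI, insert w, auto)
    have "w @\<^sub>v 0\<^sub>v m \<in> carrier_vec n" using w n by auto
    from hP[rule_format, OF this] show ?thesis unfolding 1 2 s0 by simp
  qed
  define M where "M = transpose_mat P * B * P"
  have M: "M \<in> carrier_mat n n" unfolding M_def using P B by auto
  obtain C X Y E where sp: "split_block M k k = (C, X, Y, E)" by (cases "split_block M k k") auto
  have dimsM: "dim_row M = k + m" "dim_col M = k + m" using M n by auto
  note spl = split_block[OF sp dimsM]
  have C: "C \<in> carrier_mat k k" and X: "X \<in> carrier_mat k m" and Y: "Y \<in> carrier_mat m k"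
    and E: "E \<in> carrier_mat m m" and MB: "M = four_block_mat C X Y E" using spl by auto
  have Ms: "transpose_mat M = M"
  proof -
    have "transpose_mat M = transpose_mat P * transpose_mat (transpose_mat P * B)"
      unfolding M_def by (rule transpose_mult[of _ n n], insert P B, auto)
    also have "transpose_mat (transpose_mat P * B) = transpose_mat B * P"
      by (subst transpose_mult[of _ n n], insert P B, auto)
    finally show ?thesis unfolding M_def Bs using P B by (simp add: assoc_mult_mat[of _ n n _ n _ n])
  qed
  have "four_block_mat (transpose_mat C) (transpose_mat Y) (transpose_mat X) (transpose_mat E) = four_block_mat C X Y E"
    using Ms unfolding MB transpose_four_block_mat[OF C X Y E] .
  from four_block_eq[OF _ _ _ _ C X Y E this] C X Y E
  have Cs: "transpose_mat C = C" and YX: "Y = transpose_mat X" and Es: "transpose_mat E = E" by auto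
  have K2: "w \<bullet> (C *\<^sub>v w) = p w" if w: "w \<in> carrier_vec k" for w
  proof -
    have w0: "w @\<^sub>v 0\<^sub>v m \<in> carrier_vec n" using w n by auto
    have "w \<bullet> (C *\<^sub>v w) = (w @\<^sub>v 0\<^sub>v m) \<bullet> (M *\<^sub>v (w @\<^sub>v 0\<^sub>v m))"
      unfolding MB by (rule block_bil[symmetric, OF C X Y E w w])
    also have "\<dots> = bil_eval B (P *\<^sub>v (w @\<^sub>v 0\<^sub>v m)) (P *\<^sub>v (w @\<^sub>v 0\<^sub>v m))"
      unfolding M_def bil_eval_def by (rule ptbp[OF B P(1) w0 w0])
    finally show ?thesis using K[OF w] by simp
  qed
  have dC: "det C \<noteq> 0"
  proof
    assume "det C = 0"
    then obtain v where v: "v \<in> carrier_vec k" "v \<noteq> 0\<^sub>v k" "C *\<^sub>v v = 0\<^sub>v k"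
      using det_0_iff_vec_prod_zero_field[OF C] by auto
    have v0: "v @\<^sub>v 0\<^sub>v m \<in> carrier_vec n" using v n by auto
    have "p v = 0" using K2[OF v(1)] v by simp
    then have "bil_eval B (P *\<^sub>v (v @\<^sub>v 0\<^sub>v m)) (P *\<^sub>v (v @\<^sub>v 0\<^sub>v m)) = 0" using K[OF v(1)] by simp
    then have "P *\<^sub>v (v @\<^sub>v 0\<^sub>v m) = 0\<^sub>v n" using anB P(1) v0 by auto
    then have "Pi *\<^sub>v (P *\<^sub>v (v @\<^sub>v 0\<^sub>v m)) = 0\<^sub>v n" using Pi(1) by (simp add: mat_vec_zero)
    moreover have "Pi *\<^sub>v (P *\<^sub>v (v @\<^sub>v 0\<^sub>v m)) = v @\<^sub>v 0\<^sub>v m"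
      using assoc_mult_mat_vec[OF Pi(1) P(1) v0, symmetric] Pi(2) v0 by simp
    ultimately have z: "v @\<^sub>v 0\<^sub>v m = 0\<^sub>v n" by simp
    have "v = 0\<^sub>v k"
    proof (rule eq_vecI)
      fix i assume "i < dim_vec (0\<^sub>v k :: 'a vec)"
      then have i: "i < k" by simp
      from arg_cong[OF z, of "\<lambda>u. u $ i"] show "v $ i = 0\<^sub>v k $ i" using v i n by simp
    qed (use v in simp)
    with v show False by simp
  qed
  obtain Ci where Ci: "Ci \<in> carrier_mat k k" "C * Ci = 1\<^sub>m k" "Ci * C = 1\<^sub>m k" using inv_det[OF C dC] by auto
  have Cis: "transpose_mat Ci = Ci"
  proof -
    have "C * transpose_mat Ci = 1\<^sub>m k"
      using arg_cong[OF Ci(3), of transpose_mat] transpose_mult[OF Ci(1) C] Cs by simp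
    then have "Ci * (C * transpose_mat Ci) = Ci" using Ci(1) by simp
    then show ?thesis using Ci C by (simp add: assoc_mult_mat[of _ k k _ k _ k, symmetric])
  qed
  define X' where "X' = Ci * X"
  have X': "X' \<in> carrier_mat k m" unfolding X'_def using Ci X by auto
  define T where "T = four_block_mat (1\<^sub>m k) (- X') (0\<^sub>m m k) (1\<^sub>m m)"
  define Ti where "Ti = four_block_mat (1\<^sub>m k) X' (0\<^sub>m m k) (1\<^sub>m m)"
  define E' where "E' = E - Y * X'"
  have E': "E' \<in> carrier_mat m m" unfolding E'_def using E Y X' by auto
  have mX': "- X' \<in> carrier_mat k m" using X' by auto
  have T: "T \<in> carrier_mat n n" unfolding T_def n by (rule four_block_carrier_mat, auto)
  have Ti: "Ti \<in> carrier_mat n n" unfolding Ti_def n by (rule four_block_carrier_mat, auto)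
  have TTi: "T * Ti = 1\<^sub>m n"
  proof -
    have "T * Ti = four_block_mat (1\<^sub>m k * 1\<^sub>m k + - X' * 0\<^sub>m m k) (1\<^sub>m k * X' + - X' * 1\<^sub>m m)
        (0\<^sub>m m k * 1\<^sub>m k + 1\<^sub>m m * 0\<^sub>m m k) (0\<^sub>m m k * X' + 1\<^sub>m m * 1\<^sub>m m)"
      unfolding T_def Ti_def by (rule mult_four_block_mat[OF one_carrier_mat mX' zero_carrier_mat one_carrier_mat one_carrier_mat X' zero_carrier_mat one_carrier_mat])
    also have "\<dots> = four_block_mat (1\<^sub>m k) (0\<^sub>m k m) (0\<^sub>m m k) (1\<^sub>m m)"
      using X' by (simp add: add_uminus_minus_mat[OF X' X'])
    finally show ?thesis unfolding n by simp
  qed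
  have TiT: "Ti * T = 1\<^sub>m n"
  proof -
    have "Ti * T = four_block_mat (1\<^sub>m k * 1\<^sub>m k + X' * 0\<^sub>m m k) (1\<^sub>m k * - X' + X' * 1\<^sub>m m)
        (0\<^sub>m m k * 1\<^sub>m k + 1\<^sub>m m * 0\<^sub>m m k) (0\<^sub>m m k * - X' + 1\<^sub>m m * 1\<^sub>m m)"
      unfolding T_def Ti_def by (rule mult_four_block_mat[OF one_carrier_mat X' zero_carrier_mat one_carrier_mat one_carrier_mat mX' zero_carrier_mat one_carrier_mat])
    also have "\<dots> = four_block_mat (1\<^sub>m k) (0\<^sub>m k m) (0\<^sub>m m k) (1\<^sub>m m)"
      using X' by (simp add: uminus_l_inv_mat[OF X'])
    finally show ?thesis unfolding n by simp
  qed
  have CX': "C * X' = X" unfolding X'_def using C Ci X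
    by (simp add: assoc_mult_mat[of _ k k _ k _ m, symmetric])
  have MT: "M * T = four_block_mat C (0\<^sub>m k m) Y E'"
  proof -
    have "M * T = four_block_mat (C * 1\<^sub>m k + X * 0\<^sub>m m k) (C * - X' + X * 1\<^sub>m m)
        (Y * 1\<^sub>m k + E * 0\<^sub>m m k) (Y * - X' + E * 1\<^sub>m m)"
      unfolding MB T_def by (rule mult_four_block_mat[OF C X Y E one_carrier_mat mX' zero_carrier_mat one_carrier_mat])
    also have "\<dots> = four_block_mat C (0\<^sub>m k m) Y E'"
    proof (rule cong_four_block_mat)
      show "C * 1\<^sub>m k + X * 0\<^sub>m m k = C" using C X by simp
      have "C * - X' = - (C * X')" by (rule uminus_mult_right_mat, insert C X', auto)
      then have "C * - X' = - X" unfolding CX' .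
      then show "C * - X' + X * 1\<^sub>m m = 0\<^sub>m k m" using X by (simp add: uminus_l_inv_mat[OF X])
      show "Y * 1\<^sub>m k + E * 0\<^sub>m m k = Y" using Y E by simp
      have "Y * - X' = - (Y * X')" by (rule uminus_mult_right_mat, insert Y X', auto)
      then have "Y * - X' + E * 1\<^sub>m m = - (Y * X') + E" using Y E by simp
      also have "\<dots> = E' " unfolding E'_def using Y X' E
        by (metis add.commute add_uminus_minus_mat mult_carrier_mat uminus_carrier_mat comm_add_mat)
      finally show "Y * - X' + E * 1\<^sub>m m = E'" .
    qed
    finally show ?thesis .
  qed
  have tX': "transpose_mat X' = Y * Ci" unfolding X'_def YX using transpose_mult[OF Ci(1) X] Cis by simp
  have TT: "transpose_mat T = four_block_mat (1\<^sub>m k) (0\<^sub>m k m) (- (Y * Ci)) (1\<^sub>m m)"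
    unfolding T_def transpose_four_block_mat[OF one_carrier_mat mX' zero_carrier_mat one_carrier_mat]
    by (simp add: transpose_uminus tX')
  have YCi: "Y * Ci \<in> carrier_mat m k" using Y Ci by auto
  have mYCi: "- (Y * Ci) \<in> carrier_mat m k" using YCi by auto
  have TMT: "transpose_mat T * (M * T) = four_block_mat C (0\<^sub>m k m) (0\<^sub>m m k) E'"
  proof -
    have "transpose_mat T * (M * T) = four_block_mat (1\<^sub>m k * C + 0\<^sub>m k m * Y) (1\<^sub>m k * 0\<^sub>m k m + 0\<^sub>m k m * E')
        (- (Y * Ci) * C + 1\<^sub>m m * Y) (- (Y * Ci) * 0\<^sub>m k m + 1\<^sub>m m * E')"
      unfolding TT MT by (rule mult_four_block_mat[OF one_carrier_mat zero_carrier_mat mYCi one_carrier_mat C zero_carrier_mat Y E'])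
    also have "\<dots> = four_block_mat C (0\<^sub>m k m) (0\<^sub>m m k) E'"
    proof (rule cong_four_block_mat)
      show "1\<^sub>m k * C + 0\<^sub>m k m * Y = C" using C Y by simp
      show "1\<^sub>m k * 0\<^sub>m k m + 0\<^sub>m k m * E' = 0\<^sub>m k m" using E' by simp
      have "Y * Ci * C = Y" using Y Ci C by (simp add: assoc_mult_mat[of _ m k _ k _ k])
      moreover have "- (Y * Ci) * C = - (Y * Ci * C)" by (rule uminus_mult_left_mat, insert C YCi, auto)
      ultimately have "- (Y * Ci) * C = - Y" by simp
      then show "- (Y * Ci) * C + 1\<^sub>m m * Y = 0\<^sub>m m k" using Y by (simp add: uminus_l_inv_mat[OF Y])
      have "- (Y * Ci) * 0\<^sub>m k m = 0\<^sub>m m m" by (rule right_mult_zero_mat[OF mYCi])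
      then show "- (Y * Ci) * 0\<^sub>m k m + 1\<^sub>m m * E' = E'" using E' by simp
    qed
    finally show ?thesis .
  qed
  define Q where "Q = P * T"
  have Q: "Q \<in> carrier_mat n n" unfolding Q_def using P T by auto
  have Qi: "invertible_mat Q"
  proof (rule inv_intro[OF Q, of "Ti * Pi"])
    show "Ti * Pi \<in> carrier_mat n n" using Ti Pi by auto
    have "Q * (Ti * Pi) = P * ((T * Ti) * Pi)" unfolding Q_def using P(1) T Ti Pi(1)
      by (simp add: assoc_mult_mat[of _ n n _ n _ n])
    then show "Q * (Ti * Pi) = 1\<^sub>m n" unfolding TTi using Pi P(1) by simp
    have "Ti * Pi * Q = Ti * ((Pi * P) * T)" unfolding Q_def using P(1) T Ti Pi(1)
      by (simp add: assoc_mult_mat[of _ n n _ n _ n])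
    then show "Ti * Pi * Q = 1\<^sub>m n" unfolding Pi(2) using TiT T Ti by simp
  qed
  have QBQ: "transpose_mat Q * B * Q = four_block_mat C (0\<^sub>m k m) (0\<^sub>m m k) E'"
  proof -
    have "transpose_mat Q = transpose_mat T * transpose_mat P" unfolding Q_def by (rule transpose_mult[OF P(1) T])
    then have "transpose_mat Q * B * Q = transpose_mat T * (M * T)"
      unfolding Q_def M_def using P(1) T B by (simp add: assoc_mult_mat[of _ n n _ n _ n])
    then show ?thesis using TMT by simp
  qed
  have dE': "det E' \<noteq> 0"
  proof -
    have "det (transpose_mat Q * B * Q) = det (transpose_mat Q) * det B * det Q"
      using Q B by (simp add: det_mult[of _ n])
    also have "\<dots> \<noteq> 0" using det_inv[OF Q Qi] dB det_transpose[OF Q] by simp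
    finally have "det (four_block_mat C (0\<^sub>m k m) (0\<^sub>m m k) E') \<noteq> 0" unfolding QBQ .
    then show ?thesis using det_four_block_mat_lower_left_zero[OF C zero_carrier_mat refl E'] by simp
  qed
  have tY: "transpose_mat Y = X" unfolding YX by simp
  have E's: "transpose_mat E' = E'"
  proof -
    have "transpose_mat E' = transpose_mat E - transpose_mat (Y * X')"
      unfolding E'_def by (rule transpose_minus[OF E], insert Y X', auto)
    also have "transpose_mat (Y * X') = transpose_mat X' * transpose_mat Y" by (rule transpose_mult[OF Y X'])
    also have "\<dots> = Y * Ci * X" unfolding tX' tY ..
    also have "\<dots> = Y * X'" unfolding X'_def using Y Ci X by (simp add: assoc_mult_mat[of _ m k _ k _ m])
    finally show ?thesis unfolding Es E'_def .
  qed
  have dimC: "dim_row C = k" and dimE': "dim_row E' = m" using C E' by auto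
  have sC: "sym_bil_form C" unfolding sym_bil_form_def using C Cs dC by auto
  have sE': "sym_bil_form E'" unfolding sym_bil_form_def using E' E's dE' by auto
  have osum: "bil_osum C E' = four_block_mat C (0\<^sub>m k m) (0\<^sub>m m k) E'" unfolding bil_osum_def dimC dimE' ..
  have "bil_iso B (bil_osum C E')"
    unfolding bil_iso_def osum using Q Qi QBQ B n dimC dimE' by (auto simp: n_def[symmetric])
  then have subC: "bil_subform C B" unfolding bil_subform_def using sC sE' by blast
  have i1: "invertible_mat (1\<^sub>m k :: 'a mat)" by (rule inv_intro[of _ k "1\<^sub>m k"], auto)
  have "qf_iso (qf_of C) phi"
    unfolding qf_iso_def qf_of_def phi using i1 K2 dimC by (auto simp: bil_eval_def)
  then show ?thesis using subC by blast
qed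

theorem lemma3p2:
  fixes B :: "'a::field mat" and phi :: "'a qform"
  assumes "CHAR('a) = 2"
    and "sym_bil_form B"
    and "bil_anisotropic B"
    and "ql_subform phi (qf_of B)"
  shows "(\<exists>C. bil_subform C B \<and> qf_iso (qf_of C) phi) \<and>
         (\<forall>C D. bil_subform C B \<and> qf_iso (qf_of C) phi \<and>
                bil_subform D B \<and> qf_iso (qf_of D) phi \<longrightarrow> bil_iso C D)"
  using exist[OF assms] uniq[OF assms(1,2,3)] by blast

end
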